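(* In the static load balancing game described in the context, suppose all initial loads are zero, i.e., $s_j^0=0$ for all $j\in[m]$. Then $\mathrm{PoA}\le 3$.
   Context: Static load balancing game: there are $m$ servers $[m]$ with service rates $\mu_j>0$ and initial loads $s_j^0\ge0$, and $n$ players $[n]$; player $i$ holds a job of length $\lambda_i>0$. Player $i$'s action set is $A_i=\{a_i=(a_{i1},\dots,a_{im}):\sum_j a_{ij}=1,\ a_{ij}\ge0\}$. The cost of player $i$ is $$D_i(a)=\sum_{j=1}^m \lambda_i a_{ij}\left(\frac{\lambda_i a_{ij}}{2\mu_j}+\frac{s_j^0+\sum_{k\neq i}\lambda_k a_{kj}}{\mu_j}\right).$$ A pure Nash equilibrium (NE) is a profile $a$ with $D_i(a_i,a_{-i})\le D_i(a_i',a_{-i})$ for all $i$, $a_i'\in A_i$. The price of anarchy is $\mathrm{PoA}=\dfrac{\max_{a\in\mathrm{NE}}\sum_iD_i(a)}{\min_a\sum_iD_i(a)}$. *)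

theory Defs
  imports Complex_Main
begin

text \<open>Servers are indexed by {..<m}, players by {..<n}.
  mu j: service rate, s0 j: initial load, lam i: job length of player i.
  A profile is a :: nat => nat => real, where a i j is the fraction of
  player i's job sent to server j.\<close>

definition is_action :: "nat \<Rightarrow> (nat \<Rightarrow> real) \<Rightarrow> bool" where
  "is_action m x \<longleftrightarrow> (\<forall>j<m. x j \<ge> 0) \<and> (\<Sum>j<m. x j) = 1"

definition is_profile :: "nat \<Rightarrow> nat \<Rightarrow> (nat \<Rightarrow> nat \<Rightarrow> real) \<Rightarrow> bool" where
  "is_profile m n a \<longleftrightarrow> (\<forall>i<n. is_action m (a i))"

definition cost ::
  "nat \<Rightarrow> nat \<Rightarrow> (nat \<Rightarrow> real) \<Rightarrow> (nat \<Rightarrow> real) \<Rightarrow> (nat \<Rightarrow> real)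
     \<Rightarrow> (nat \<Rightarrow> nat \<Rightarrow> real) \<Rightarrow> nat \<Rightarrow> real" where
  "cost m n mu s0 lam a i =
     (\<Sum>j<m. lam i * a i j *
        (lam i * a i j / (2 * mu j)
         + (s0 j + (\<Sum>k\<in>{..<n} - {i}. lam k * a k j)) / mu j))"

definition social_cost ::
  "nat \<Rightarrow> nat \<Rightarrow> (nat \<Rightarrow> real) \<Rightarrow> (nat \<Rightarrow> real) \<Rightarrow> (nat \<Rightarrow> real)
     \<Rightarrow> (nat \<Rightarrow> nat \<Rightarrow> real) \<Rightarrow> real" where
  "social_cost m n mu s0 lam a = (\<Sum>i<n. cost m n mu s0 lam a i)"

definition is_NE ::
  "nat \<Rightarrow> nat \<Rightarrow> (nat \<Rightarrow> real) \<Rightarrow> (nat \<Rightarrow> real) \<Rightarrow> (nat \<Rightarrow> real)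
     \<Rightarrow> (nat \<Rightarrow> nat \<Rightarrow> real) \<Rightarrow> bool" where
  "is_NE m n mu s0 lam a \<longleftrightarrow> is_profile m n a \<and>
     (\<forall>i<n. \<forall>x. is_action m x \<longrightarrow>
        cost m n mu s0 lam a i \<le> cost m n mu s0 lam (a(i := x)) i)"

end

theory Submission
  imports Defs
begin

lemma alg1: fixes x R L u :: real assumes "L = x + R"
  shows "x * (x / (2 * u) + (0 + R) / u) = x * (L - x / 2) / u"
  using assms by (cases "u = 0") (simp_all add: field_simps)

lemma cost_eq:
  assumes i: "i < n" and s0: "\<forall>j<m. s0 j = 0"
  shows "cost m n mu s0 lam c i =
    (\<Sum>j<m. lam i * c i j * ((\<Sum>k<n. lam k * c k j) - lam i * c i j / 2) / mu j)"
  unfolding cost_def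
proof (rule sum.cong[OF refl])
  fix j assume j: "j \<in> {..<m}"
  have "(\<Sum>k\<in>{..<n} - {i}. lam k * c k j) = (\<Sum>k<n. lam k * c k j) - lam i * c i j"
    using i by (simp add: sum_diff1)
  moreover have "s0 j = 0" using s0 j by simp
  ultimately show "lam i * c i j * (lam i * c i j / (2 * mu j) + (s0 j + (\<Sum>k\<in>{..<n} - {i}. lam k * c k j)) / mu j) =
    lam i * c i j * ((\<Sum>k<n. lam k * c k j) - lam i * c i j / 2) / mu j"
    using alg1[where L="\<Sum>k<n. lam k * c k j" and x="lam i * c i j"
        and R="\<Sum>k\<in>{..<n} - {i}. lam k * c k j" and u="mu j"] by simp
qed

lemma dev_eq:
  "cost m n mu s0 lam (a(i := z)) i =
    (\<Sum>j<m. lam i * z j * (lam i * z j / (2 * mu j) + (s0 j + (\<Sum>k\<in>{..<n} - {i}. lam k * a k j)) / mu j))"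
  unfolding cost_def by (intro sum.cong refl) auto

lemma first_order:
  fixes G H :: real
  assumes "\<And>t. 0 < t \<Longrightarrow> t \<le> 1 \<Longrightarrow> 0 \<le> t * G + t^2 * H"
  shows "0 \<le> G"
proof (rule ccontr)
  assume "\<not> 0 \<le> G" hence G: "G < 0" by simp
  have "0 \<le> G + H" using assms[of 1] by simp
  hence H: "H > 0" using G by simp
  define t where "t = min 1 (- G / (2 * H))"
  have t0: "0 < t" using G H by (simp add: t_def divide_neg_pos)
  have t1: "t \<le> 1" by (simp add: t_def)
  have "t \<le> - G / (2 * H)" by (simp add: t_def)
  hence "t * H \<le> - G / 2" using H by (simp add: field_simps)
  hence "G + t * H < 0" using G by simp
  hence "t * (G + t * H) < 0" using t0 by (simp add: mult_pos_neg)
  moreover have "t * G + t^2 * H = t * (G + t * H)" by (simp add: power2_eq_square algebra_simps)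
  ultimately show False using assms[OF t0 t1] by simp
qed


lemma alg2: fixes l x y t u S :: real
  shows "l * (x + t * (y - x)) * (l * (x + t * (y - x)) / (2 * u) + S / u) =
    l * x * (l * x / (2 * u) + S / u) + t * (l * (y - x) * (l * x + S) / u)
    + t^2 * (l^2 * (y - x)^2 / (2 * u))"
  by (cases "u = 0") (simp_all add: field_simps power2_eq_square)

lemma expand:
  fixes x y R :: "nat \<Rightarrow> real" and l t :: real
  shows "(\<Sum>j<m. l * (x j + t * (y j - x j)) * (l * (x j + t * (y j - x j)) / (2 * mu j) + (s0 j + R j) / mu j)) =
    (\<Sum>j<m. l * x j * (l * x j / (2 * mu j) + (s0 j + R j) / mu j))
    + t * (\<Sum>j<m. l * (y j - x j) * (l * x j + (s0 j + R j)) / mu j)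
    + t^2 * (\<Sum>j<m. l^2 * (y j - x j)^2 / (2 * mu j))"
  by (simp add: alg2 sum.distrib sum_distrib_left)

lemma half_sum: fixes f u :: "nat \<Rightarrow> real"
  shows "(\<Sum>j<m. f j / (2 * u j)) = (\<Sum>j<m. f j / u j) / 2"
  unfolding sum_divide_distrib by (intro sum.cong refl) (simp add: divide_divide_eq_left mult.commute)

theorem corollary1:
  fixes m n :: nat and mu s0 lam :: "nat \<Rightarrow> real"
    and a b :: "nat \<Rightarrow> nat \<Rightarrow> real"
  assumes mu_pos: "\<forall>j<m. mu j > 0"
    and lam_pos: "\<forall>i<n. lam i > 0"
    and s0_zero: "\<forall>j<m. s0 j = 0"
    and NE: "is_NE m n mu s0 lam a"
    and prof: "is_profile m n b"
  shows "social_cost m n mu s0 lam a \<le> 3 * social_cost m n mu s0 lam b"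
proof -
  define L where "L j = (\<Sum>k<n. lam k * a k j)" for j
  define M where "M j = (\<Sum>k<n. lam k * b k j)" for j
  have profa: "is_profile m n a" using NE by (simp add: is_NE_def)
  have a_nn: "\<And>i j. i < n \<Longrightarrow> j < m \<Longrightarrow> a i j \<ge> 0" using profa by (simp add: is_profile_def is_action_def)
  have b_nn: "\<And>i j. i < n \<Longrightarrow> j < m \<Longrightarrow> b i j \<ge> 0" using prof by (simp add: is_profile_def is_action_def)
  have a_s: "\<And>i. i < n \<Longrightarrow> (\<Sum>j<m. a i j) = 1" using profa by (simp add: is_profile_def is_action_def)
  have b_s: "\<And>i. i < n \<Longrightarrow> (\<Sum>j<m. b i j) = 1" using prof by (simp add: is_profile_def is_action_def)
  have Gi: "0 \<le> (\<Sum>j<m. lam i * (b i j - a i j) * L j / mu j)" if i: "i < n" for i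
  proof -
    define R where "R j = (\<Sum>k\<in>{..<n} - {i}. lam k * a k j)" for j
    have LR: "L j = lam i * a i j + R j" for j
      using i unfolding L_def R_def by (simp add: sum_diff1)
    define G where "G = (\<Sum>j<m. lam i * (b i j - a i j) * (lam i * a i j + (s0 j + R j)) / mu j)"
    define H where "H = (\<Sum>j<m. lam i ^ 2 * (b i j - a i j)^2 / (2 * mu j))"
    have "0 \<le> t * G + t^2 * H" if t0: "0 < t" and t1: "t \<le> 1" for t
    proof -
      define z where "z j = a i j + t * (b i j - a i j)" for j
      have "z j \<ge> 0" if "j < m" for j
      proof -
        have "z j = (1 - t) * a i j + t * b i j" by (simp add: z_def algebra_simps)
        moreover have "(1 - t) * a i j \<ge> 0" using t1 a_nn[OF i that] by simp
        moreover have "t * b i j \<ge> 0" using t0 b_nn[OF i that] by simp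
        ultimately show ?thesis by simp
      qed
      moreover have "(\<Sum>j<m. z j) = 1"
      proof -
        have "(\<Sum>j<m. z j) = (\<Sum>j<m. a i j) + t * ((\<Sum>j<m. b i j) - (\<Sum>j<m. a i j))"
          unfolding z_def sum.distrib sum_subtractf[symmetric] sum_distrib_left ..
        thus ?thesis using a_s[OF i] b_s[OF i] by simp
      qed
      ultimately have za: "is_action m z" by (simp add: is_action_def)
      have "cost m n mu s0 lam a i \<le> cost m n mu s0 lam (a(i := z)) i"
        using NE za i unfolding is_NE_def by blast
      hence le: "cost m n mu s0 lam (a(i := a i)) i \<le> cost m n mu s0 lam (a(i := z)) i"
        by (simp only: fun_upd_triv)
      have e1: "cost m n mu s0 lam (a(i := z)) i =
        (\<Sum>j<m. lam i * a i j * (lam i * a i j / (2 * mu j) + (s0 j + R j) / mu j)) + t * G + t^2 * H"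
        unfolding dev_eq z_def G_def H_def R_def[symmetric] by (rule expand)
      have e0: "cost m n mu s0 lam (a(i := a i)) i =
        (\<Sum>j<m. lam i * a i j * (lam i * a i j / (2 * mu j) + (s0 j + R j) / mu j))"
        unfolding dev_eq R_def[symmetric] ..
      show ?thesis using le unfolding e0 e1 by linarith
    qed
    hence "0 \<le> G" by (rule first_order)
    moreover have "G = (\<Sum>j<m. lam i * (b i j - a i j) * L j / mu j)"
      unfolding G_def using s0_zero LR by (intro sum.cong refl) simp
    ultimately show ?thesis by simp
  qed
  have "0 \<le> (\<Sum>i<n. \<Sum>j<m. lam i * (b i j - a i j) * L j / mu j)"
    by (rule sum_nonneg) (use Gi in simp)
  also have "\<dots> = (\<Sum>j<m. (M j - L j) * L j / mu j)"
  proof (subst sum.swap, rule sum.cong[OF refl])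
    fix j
    have "(\<Sum>i<n. lam i * (b i j - a i j)) = M j - L j"
      unfolding M_def L_def right_diff_distrib sum_subtractf ..
    thus "(\<Sum>i<n. lam i * (b i j - a i j) * L j / mu j) = (M j - L j) * L j / mu j"
      by (simp add: sum_distrib_right[symmetric] sum_divide_distrib[symmetric])
  qed
  also have "\<dots> \<le> (\<Sum>j<m. (M j ^ 2 - L j ^ 2) / (2 * mu j))"
  proof (rule sum_mono)
    fix j assume "j \<in> {..<m}"
    hence mu: "mu j > 0" using mu_pos by simp
    have "(M j - L j) * L j \<le> (M j ^ 2 - L j ^ 2) / 2"
      using sum_squares_ge_zero[of "M j - L j" 0] by (simp add: power2_eq_square algebra_simps)
    hence "(M j - L j) * L j / mu j \<le> (M j ^ 2 - L j ^ 2) / 2 / mu j"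
      by (rule divide_right_mono) (use mu in simp)
    thus "(M j - L j) * L j / mu j \<le> (M j ^ 2 - L j ^ 2) / (2 * mu j)"
      by (simp add: divide_divide_eq_left)
  qed
  also have "\<dots> = ((\<Sum>j<m. M j ^ 2 / mu j) - (\<Sum>j<m. L j ^ 2 / mu j)) / 2"
    by (simp only: diff_divide_distrib sum_subtractf half_sum)
  finally have key: "(\<Sum>j<m. L j ^ 2 / mu j) \<le> (\<Sum>j<m. M j ^ 2 / mu j)" by simp
  have "social_cost m n mu s0 lam a = (\<Sum>i<n. \<Sum>j<m. lam i * a i j * (L j - lam i * a i j / 2) / mu j)"
    unfolding social_cost_def L_def using cost_eq[OF _ s0_zero] by (intro sum.cong refl) simp
  also have "\<dots> \<le> (\<Sum>i<n. \<Sum>j<m. lam i * a i j * L j / mu j)"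
  proof (intro sum_mono)
    fix i j assume "i \<in> {..<n}" "j \<in> {..<m}"
    hence "mu j > 0" "lam i * a i j \<ge> 0" using mu_pos lam_pos a_nn by auto
    thus "lam i * a i j * (L j - lam i * a i j / 2) / mu j \<le> lam i * a i j * L j / mu j"
      by (simp add: divide_right_mono mult_left_mono)
  qed
  also have "\<dots> = (\<Sum>j<m. L j ^ 2 / mu j)"
    by (subst sum.swap) (simp add: L_def power2_eq_square sum_distrib_right sum_divide_distrib)
  finally have A: "social_cost m n mu s0 lam a \<le> (\<Sum>j<m. L j ^ 2 / mu j)" .
  have "(\<Sum>j<m. M j ^ 2 / (2 * mu j)) = (\<Sum>i<n. \<Sum>j<m. lam i * b i j * M j / (2 * mu j))"
    by (subst sum.swap) (simp add: M_def power2_eq_square sum_distrib_right sum_divide_distrib)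
  also have "\<dots> \<le> (\<Sum>i<n. \<Sum>j<m. lam i * b i j * (M j - lam i * b i j / 2) / mu j)"
  proof (intro sum_mono)
    fix i j assume ij: "i \<in> {..<n}" "j \<in> {..<m}"
    hence mu: "mu j > 0" and y: "lam i * b i j \<ge> 0" using mu_pos lam_pos b_nn by auto
    have "lam i * b i j \<le> M j" unfolding M_def
      by (rule member_le_sum[of i "{..<n}" "\<lambda>k. lam k * b k j"])
        (use ij lam_pos b_nn in \<open>auto intro: mult_nonneg_nonneg less_imp_le\<close>)
    hence "lam i * b i j * M j / 2 \<le> lam i * b i j * (M j - lam i * b i j / 2)"
      using y mult_left_mono[OF \<open>lam i * b i j \<le> M j\<close> y] by (simp add: algebra_simps)
    thus "lam i * b i j * M j / (2 * mu j) \<le> lam i * b i j * (M j - lam i * b i j / 2) / mu j"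
      using mu by (simp add: field_simps)
  qed
  also have "\<dots> = social_cost m n mu s0 lam b"
    unfolding social_cost_def M_def using cost_eq[OF _ s0_zero] by (intro sum.cong refl) simp
  finally have B: "(\<Sum>j<m. M j ^ 2 / (2 * mu j)) \<le> social_cost m n mu s0 lam b" .
  have "(\<Sum>j<m. M j ^ 2 / (2 * mu j)) = (\<Sum>j<m. M j ^ 2 / mu j) / 2"
    by (rule half_sum)
  moreover have "0 \<le> (\<Sum>j<m. M j ^ 2 / mu j)"
    using mu_pos by (intro sum_nonneg) (simp add: less_imp_le)
  ultimately show ?thesis using A B key by linarith
qed

end
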